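(* Let $1\le k\le n$, let $\mathcal{G}_{k-1}$ be a nearest-neighbor graph of a storage network with node set $\mathcal{N}$ and RTT function $\tau$, and let $\mathcal{H}$ be its extended graph. An uncoded storage scheme admissible on $\mathcal{G}_{k-1}$ exists if and only if the chromatic number of $\mathcal{H}$ satisfies $\chi(\mathcal{H})=k$.
   Context: A storage network consists of $n$ nodes $\mathcal{N}=\{1,\dots,n\}$ and a round-trip-time (RTT) function $\tau:\mathcal{N}\times\mathcal{N}\to\mathbb{R}_{\ge 0}$, symmetric with $\tau(i,i)=0$, and $k\le n$ information files $W_1,\dots,W_k$. An uncoded storage scheme stores at each node $i$ one file $X_i=W_{\sigma(i)}$ for a map $\sigma:\mathcal{N}\to[k]$. For node $i$, $\lambda_0^{(i)}\le\dots\le\lambda_{n-1}^{(i)}$ is the sorted list of $\{\tau(j,i):j\in\mathcal{N}\}$. A nearest-neighbor graph $\mathcal{G}_{k-1}$ is a directed graph on $\mathcal{N}$ in which each node $i$ has incoming edges from exactly $k-1$ other nodes whose RTTs to $i$ are the $k-1$ smallest values $\lambda_1^{(i)},\dots,\lambda_{k-1}^{(i)}$ (ties broken arbitrarily); these $k-1$ nodes are called the neighbors of $i$ (a node reached only by an outgoing edge of $i$ is not a neighbor of $i$). An uncoded scheme is admissible on $\mathcal{G}_{k-1}$ if for every node $i$ and every $j\in[k]$, some node in $\{i\}\cup\{\text{neighbors of } i\}$ stores $W_j$. The extended graph $\mathcal{H}$ of $\mathcal{G}_{k-1}$ is the undirected graph on $\mathcal{N}$ in which two distinct nodes are adjacent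 iff they are joined by a directed edge (in either direction) in $\mathcal{G}_{k-1}$, or they are both neighbors of a common node in $\mathcal{G}_{k-1}$. *)

theory Defs
  imports Complex_Main "HOL-Library.Multiset"
begin

text \<open>The nearest-neighbor graph G_{k-1} is represented by the neighbor map nb:
  nb i is the set of the k-1 nodes having incoming edges into i.\<close>

definition sorted_rtts :: "nat \<Rightarrow> (nat \<Rightarrow> nat \<Rightarrow> real) \<Rightarrow> nat \<Rightarrow> real list" where
  "sorted_rtts n tau i = sort (map (\<lambda>j. tau j i) [1..<Suc n])"

definition is_nn_graph :: "nat \<Rightarrow> (nat \<Rightarrow> nat \<Rightarrow> real) \<Rightarrow> nat \<Rightarrow> (nat \<Rightarrow> nat set) \<Rightarrow> bool" where
  "is_nn_graph n tau k nb \<longleftrightarrow>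
     (\<forall>i\<in>{1..n}. nb i \<subseteq> {1..n} - {i} \<and> card (nb i) = k - 1 \<and>
        image_mset (\<lambda>j. tau j i) (mset_set (nb i))
          = mset (take (k - 1) (drop 1 (sorted_rtts n tau i))))"

definition admissible :: "nat \<Rightarrow> nat \<Rightarrow> (nat \<Rightarrow> nat set) \<Rightarrow> (nat \<Rightarrow> nat) \<Rightarrow> bool" where
  "admissible n k nb \<sigma> \<longleftrightarrow>
     (\<forall>i\<in>{1..n}. \<sigma> i \<in> {1..k}) \<and>
     (\<forall>i\<in>{1..n}. \<forall>j\<in>{1..k}. \<exists>m\<in>insert i (nb i). \<sigma> m = j)"

definition ext_adj :: "nat \<Rightarrow> (nat \<Rightarrow> nat set) \<Rightarrow> nat \<Rightarrow> nat \<Rightarrow> bool" where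
  "ext_adj n nb u v \<longleftrightarrow> u \<in> {1..n} \<and> v \<in> {1..n} \<and> u \<noteq> v \<and>
     (u \<in> nb v \<or> v \<in> nb u \<or> (\<exists>w\<in>{1..n}. u \<in> nb w \<and> v \<in> nb w))"

definition colorable :: "nat set \<Rightarrow> (nat \<Rightarrow> nat \<Rightarrow> bool) \<Rightarrow> nat \<Rightarrow> bool" where
  "colorable V E c \<longleftrightarrow> (\<exists>f. (\<forall>v\<in>V. f v < c) \<and> (\<forall>u\<in>V. \<forall>v\<in>V. E u v \<longrightarrow> f u \<noteq> f v))"

definition chromatic_number :: "nat set \<Rightarrow> (nat \<Rightarrow> nat \<Rightarrow> bool) \<Rightarrow> nat" where
  "chromatic_number V E = (LEAST c. colorable V E c)"

end

theory Submission
  imports Defs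
begin

lemma clique_props:
  assumes nn: "is_nn_graph n tau k nb" and k: "1 \<le> k" and i: "i \<in> {1..n}"
  shows "insert i (nb i) \<subseteq> {1..n}" "card (insert i (nb i)) = k"
    "\<And>u v. u \<in> insert i (nb i) \<Longrightarrow> v \<in> insert i (nb i) \<Longrightarrow> u \<noteq> v \<Longrightarrow> ext_adj n nb u v"
proof -
  have s: "nb i \<subseteq> {1..n} - {i}" and c: "card (nb i) = k - 1"
    using nn i unfolding is_nn_graph_def by auto
  have fin: "finite (nb i)" using finite_subset[OF s] by simp
  show sub: "insert i (nb i) \<subseteq> {1..n}" using s i by auto
  have "i \<notin> nb i" using s by blast
  thus "card (insert i (nb i)) = k" using c fin k by simp
  fix u v assume u: "u \<in> insert i (nb i)" and v: "v \<in> insert i (nb i)" and uv: "u \<noteq> v"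
  have un: "u \<in> {1..n}" and vn: "v \<in> {1..n}" using u v sub by auto
  have "u \<in> nb v \<or> v \<in> nb u \<or> (\<exists>w\<in>{1..n}. u \<in> nb w \<and> v \<in> nb w)"
  proof (cases "u = i")
    case True thus ?thesis using v uv by simp
  next
    case False
    show ?thesis
    proof (cases "v = i")
      case True thus ?thesis using u False by simp
    next
      case F2: False
      have "u \<in> nb i" "v \<in> nb i" using u v False F2 by auto
      thus ?thesis using i by blast
    qed
  qed
  thus "ext_adj n nb u v" unfolding ext_adj_def using un vn uv by simp
qed

lemma inj_color:
  assumes nn: "is_nn_graph n tau k nb" and k: "1 \<le> k" and i: "i \<in> {1..n}"
    and f2: "\<forall>u\<in>{1..n}. \<forall>v\<in>{1..n}. ext_adj n nb u v \<longrightarrow> f u \<noteq> f v"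
  shows "inj_on f (insert i (nb i))"
proof (rule inj_onI, rule ccontr)
  note cp = clique_props[OF nn k i]
  fix u v assume u: "u \<in> insert i (nb i)" and v: "v \<in> insert i (nb i)" and e: "f u = f v" and ne: "u \<noteq> v"
  have "ext_adj n nb u v" using cp(3)[OF u v ne] .
  moreover have "u \<in> {1..n}" "v \<in> {1..n}" using u v cp(1) by auto
  ultimately show False using f2 e by blast
qed

lemma colorable_ge:
  assumes nn: "is_nn_graph n tau k nb" and k: "1 \<le> k" and i: "i \<in> {1..n}"
    and col: "colorable {1..n} (ext_adj n nb) c"
  shows "k \<le> c"
proof -
  let ?C = "insert i (nb i)"
  note cp = clique_props[OF nn k i]
  obtain f where f1: "\<forall>v\<in>{1..n}. f v < c"
    and f2: "\<forall>u\<in>{1..n}. \<forall>v\<in>{1..n}. ext_adj n nb u v \<longrightarrow> f u \<noteq> f v"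
    using col unfolding colorable_def by blast
  have "inj_on f ?C" using inj_color[OF nn k i f2] .
  hence "card (f ` ?C) = k" using cp(2) card_image by metis
  moreover have "f ` ?C \<subseteq> {..<c}" using cp(1) f1 by auto
  ultimately have "k \<le> card {..<c}" using card_mono[OF finite_lessThan] by metis
  thus ?thesis by simp
qed

theorem theorem1:
  fixes n k :: nat and tau :: "nat \<Rightarrow> nat \<Rightarrow> real" and nb :: "nat \<Rightarrow> nat set"
  assumes "1 \<le> k" and "k \<le> n"
    and "\<forall>i\<in>{1..n}. \<forall>j\<in>{1..n}. tau i j = tau j i"
    and "\<forall>i\<in>{1..n}. \<forall>j\<in>{1..n}. tau i j \<ge> 0"
    and "\<forall>i\<in>{1..n}. tau i i = 0"
    and "is_nn_graph n tau k nb"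
  shows "(\<exists>\<sigma>. admissible n k nb \<sigma>) \<longleftrightarrow> chromatic_number {1..n} (ext_adj n nb) = k"
proof
  assume "\<exists>\<sigma>. admissible n k nb \<sigma>"
  then obtain \<sigma> where a1: "\<forall>i\<in>{1..n}. \<sigma> i \<in> {1..k}"
    and a2: "\<forall>i\<in>{1..n}. \<forall>j\<in>{1..k}. \<exists>m\<in>insert i (nb i). \<sigma> m = j"
    unfolding admissible_def by blast
  have inj: "inj_on \<sigma> (insert i (nb i))" if i: "i \<in> {1..n}" for i
  proof -
    note cp = clique_props[OF assms(6) assms(1) i]
    have fin: "finite (insert i (nb i))" using finite_subset[OF cp(1)] by simp
    have "{1..k} \<subseteq> \<sigma> ` insert i (nb i)"
    proof
      fix j assume "j \<in> {1..k}"
      hence "\<exists>m\<in>insert i (nb i). \<sigma> m = j" using a2 i by blast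
      then obtain m where "m \<in> insert i (nb i)" "\<sigma> m = j" by (rule bexE)
      thus "j \<in> \<sigma> ` insert i (nb i)" by blast
    qed
    hence "card {1..k} \<le> card (\<sigma> ` insert i (nb i))"
      by (rule card_mono[OF finite_imageI[OF fin]])
    hence "k \<le> card (\<sigma> ` insert i (nb i))" by simp
    moreover have "card (\<sigma> ` insert i (nb i)) \<le> k" using card_image_le[OF fin] cp(2) by simp
    ultimately have "card (\<sigma> ` insert i (nb i)) = card (insert i (nb i))" using cp(2) by simp
    thus ?thesis by (rule eq_card_imp_inj_on[OF fin])
  qed
  have col: "colorable {1..n} (ext_adj n nb) k"
    unfolding colorable_def
  proof (intro exI[of _ "\<lambda>v. \<sigma> v - 1"] conjI ballI impI)
    fix v assume "v \<in> {1..n}" hence "\<sigma> v \<in> {1..k}" using a1 by blast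
    thus "\<sigma> v - 1 < k" by auto
  next
    fix u v assume u: "u \<in> {1..n}" and v: "v \<in> {1..n}" and e: "ext_adj n nb u v"
    have ne: "u \<noteq> v" using e unfolding ext_adj_def by simp
    have "u \<in> nb v \<or> v \<in> nb u \<or> (\<exists>w\<in>{1..n}. u \<in> nb w \<and> v \<in> nb w)"
      using e unfolding ext_adj_def by simp
    hence "\<exists>w\<in>{1..n}. u \<in> insert w (nb w) \<and> v \<in> insert w (nb w)"
      using u v by blast
    then obtain w where w: "w \<in> {1..n}" "u \<in> insert w (nb w)" "v \<in> insert w (nb w)" by blast
    have "\<sigma> u \<noteq> \<sigma> v" using inj[OF w(1)] w(2,3) ne by (meson inj_onD)
    moreover have "\<sigma> u \<in> {1..k}" "\<sigma> v \<in> {1..k}" using a1 u v by auto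
    ultimately show "\<sigma> u - 1 \<noteq> \<sigma> v - 1" by auto
  qed
  have ex: "1 \<in> {1..n}" using assms(1,2) by auto
  show "chromatic_number {1..n} (ext_adj n nb) = k"
    unfolding chromatic_number_def
    proof (rule Least_equality)
    show "colorable {1..n} (ext_adj n nb) k" by (rule col)
  next
    fix y assume "colorable {1..n} (ext_adj n nb) y"
    thus "k \<le> y" by (rule colorable_ge[OF assms(6) assms(1) ex])
  qed
next
  assume ch: "chromatic_number {1..n} (ext_adj n nb) = k"
  have "colorable {1..n} (ext_adj n nb) n"
    unfolding colorable_def
  proof (rule exI[of _ "\<lambda>v. v - 1"], intro conjI ballI impI)
    fix v assume "v \<in> {1..n}" thus "v - 1 < n" by auto
  next
    fix u v assume u: "u \<in> {1..n}" and v: "v \<in> {1..n}" and e: "ext_adj n nb u v"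
    have "u \<noteq> v" using e unfolding ext_adj_def by simp
    thus "u - 1 \<noteq> v - 1" using u v by auto
  qed
  hence "colorable {1..n} (ext_adj n nb) (LEAST c. colorable {1..n} (ext_adj n nb) c)"
    by (rule LeastI)
  hence "colorable {1..n} (ext_adj n nb) k"
    using ch unfolding chromatic_number_def by simp
  then obtain f where f1: "\<forall>v\<in>{1..n}. f v < k"
    and f2: "\<forall>u\<in>{1..n}. \<forall>v\<in>{1..n}. ext_adj n nb u v \<longrightarrow> f u \<noteq> f v"
    unfolding colorable_def by blast
  show "\<exists>\<sigma>. admissible n k nb \<sigma>"
  proof (intro exI[of _ "\<lambda>v. f v + 1"])
    show "admissible n k nb (\<lambda>v. f v + 1)"
      unfolding admissible_def
    proof (intro conjI ballI)
      fix i assume "i \<in> {1..n}" hence "f i < k" using f1 by blast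
      thus "f i + 1 \<in> {1..k}" by simp
    next
      fix i j assume i: "i \<in> {1..n}" and j: "j \<in> {1..k}"
      note cp = clique_props[OF assms(6) assms(1) i]
      have "inj_on f (insert i (nb i))" using inj_color[OF assms(6) assms(1) i f2] .
      hence "card (f ` insert i (nb i)) = card (insert i (nb i))" by (rule card_image)
      hence c: "card (f ` insert i (nb i)) = card {..<k}" using cp(2) by (simp only: card_lessThan)
      have sub: "f ` insert i (nb i) \<subseteq> {..<k}"
      proof (rule image_subsetI)
        fix y assume "y \<in> insert i (nb i)"
        hence "y \<in> {1..n}" by (rule subsetD[OF cp(1)])
        hence "f y < k" using f1 by blast
        thus "f y \<in> {..<k}" by (rule lessThan_iff[THEN iffD2])
      qed
      have eq: "f ` insert i (nb i) = {..<k}"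
        using card_subset_eq[OF finite_lessThan sub c] .
      have "j - 1 \<in> {..<k}" using j by auto
      hence "j - 1 \<in> f ` insert i (nb i)" using eq by simp
      then obtain m where m1: "m \<in> insert i (nb i)" and m2: "f m = j - 1" by (rule imageE) simp
      have "f m + 1 = j" using j m2 by auto
      thus "\<exists>m\<in>insert i (nb i). f m + 1 = j" using m1 by blast
    qed
  qed
qed

end
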